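(* For all $n\ge1$, \[ \sum_{\sigma\in\mathcal{R}_{2n}} t^{\mathrm{drop}(\sigma)}=\sum_{j=0}^{\lfloor n/2\rfloor}\gamma_{n,j}\,t^j(1+t)^{n-2j}, \] where $\gamma_{n,j}$ is the number of primary even-odd-drop permutations in $\mathcal{R}_{2n}$ with $j$ drops.
   Context: For $\sigma\in\mathfrak{S}_m$, a drop is a pair $(i,\sigma_i)$ with $i>\sigma_i$; $i$ is the drop top and $\sigma_i$ the drop bottom; $\mathrm{drop}(\sigma)$ is the number of drops. A drop is even-odd if $i$ is even and $\sigma_i$ is odd. $\mathcal{R}_{2n}$ is the set of permutations of $[2n]$ all of whose drops are even-odd. $\sigma\in\mathcal{R}_{2n}$ with drop tops $\{t_1,\dots,t_k\}$ and drop bottoms $\{b_1,\dots,b_k\}$ is a primary even-odd-drop permutation if for all $i,j$, $t_i>b_j$ implies $t_i-b_j\ge3$. *)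

theory Defs
  imports "HOL-Combinatorics.Permutations" "HOL-Computational_Algebra.Polynomial"
begin

definition drops :: "(nat \<Rightarrow> nat) \<Rightarrow> nat \<Rightarrow> (nat \<times> nat) set" where
  "drops \<sigma> m = {(i, \<sigma> i) | i. i \<in> {1..m} \<and> i > \<sigma> i}"

definition dropnum :: "(nat \<Rightarrow> nat) \<Rightarrow> nat \<Rightarrow> nat" where
  "dropnum \<sigma> m = card (drops \<sigma> m)"

definition drop_tops :: "(nat \<Rightarrow> nat) \<Rightarrow> nat \<Rightarrow> nat set" where
  "drop_tops \<sigma> m = {i \<in> {1..m}. i > \<sigma> i}"

definition drop_bottoms :: "(nat \<Rightarrow> nat) \<Rightarrow> nat \<Rightarrow> nat set" where
  "drop_bottoms \<sigma> m = {\<sigma> i | i. i \<in> {1..m} \<and> i > \<sigma> i}"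

(* R_{2n}: permutations of [2n] all of whose drops are even-odd *)
definition R :: "nat \<Rightarrow> (nat \<Rightarrow> nat) set" where
  "R n = {\<sigma>. \<sigma> permutes {1..2*n} \<and>
            (\<forall>i \<in> {1..2*n}. i > \<sigma> i \<longrightarrow> even i \<and> odd (\<sigma> i))}"

definition primary :: "nat \<Rightarrow> (nat \<Rightarrow> nat) \<Rightarrow> bool" where
  "primary n \<sigma> \<longleftrightarrow> \<sigma> \<in> R n \<and>
     (\<forall>t \<in> drop_tops \<sigma> (2*n). \<forall>b \<in> drop_bottoms \<sigma> (2*n). t > b \<longrightarrow> t - b \<ge> 3)"

definition gamma :: "nat \<Rightarrow> nat \<Rightarrow> nat" where
  "gamma n j = card {\<sigma>. primary n \<sigma> \<and> dropnum \<sigma> (2*n) = j}"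

end

theory Submission
  imports Defs
begin

definition tau :: "nat \<Rightarrow> (nat \<Rightarrow> nat) \<Rightarrow> nat set" where
  "tau n \<sigma> = {k\<in>{1..n}. \<sigma> (2*k) < 2*k}"
definition beta :: "nat \<Rightarrow> (nat \<Rightarrow> nat) \<Rightarrow> nat set" where
  "beta n \<sigma> = {k\<in>{1..n}. \<exists>i\<in>{1..2*n}. \<sigma> i = 2*k-1 \<and> i > 2*k-1}"

lemma R_perm: "\<sigma> \<in> R n \<Longrightarrow> \<sigma> permutes {1..2*n}"
  by (simp add: R_def)
lemma R_drop: "\<sigma> \<in> R n \<Longrightarrow> i \<in> {1..2*n} \<Longrightarrow> \<sigma> i < i \<Longrightarrow> even i \<and> odd (\<sigma> i)"
  by (simp add: R_def)
lemma R_range: assumes "\<sigma> \<in> R n" "i \<in> {1..2*n}" shows "\<sigma> i \<in> {1..2*n}"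
  using permutes_in_image[OF R_perm[OF assms(1)], of i] assms(2) by metis

lemma tops_eq: assumes "\<sigma> \<in> R n" shows "drop_tops \<sigma> (2*n) = (\<lambda>k. 2*k) ` tau n \<sigma>"
proof
  show "drop_tops \<sigma> (2*n) \<subseteq> (\<lambda>k. 2*k) ` tau n \<sigma>"
  proof
    fix i assume i: "i \<in> drop_tops \<sigma> (2*n)"
    then have iS: "i \<in> {1..2*n}" and d: "\<sigma> i < i" by (auto simp: drop_tops_def)
    then have "even i" using R_drop[OF assms] by blast
    then obtain k where k: "i = 2*k" by blast
    then have "k \<in> tau n \<sigma>" using iS d by (auto simp: tau_def)
    then show "i \<in> (\<lambda>k. 2*k) ` tau n \<sigma>" using k by blast
  qed
  show "(\<lambda>k. 2*k) ` tau n \<sigma> \<subseteq> drop_tops \<sigma> (2*n)"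
    by (auto simp: tau_def drop_tops_def)
qed

lemma bots_eq: assumes "\<sigma> \<in> R n" shows "drop_bottoms \<sigma> (2*n) = (\<lambda>k. 2*k-1) ` beta n \<sigma>"
proof
  show "drop_bottoms \<sigma> (2*n) \<subseteq> (\<lambda>k. 2*k-1) ` beta n \<sigma>"
  proof
    fix v assume "v \<in> drop_bottoms \<sigma> (2*n)"
    then obtain i where iS: "i \<in> {1..2*n}" and d: "\<sigma> i < i" and v: "v = \<sigma> i"
      by (auto simp: drop_bottoms_def)
    then have "odd v" using R_drop[OF assms] by blast
    then have "v = 2*((v+1) div 2) - 1" "(v+1) div 2 \<ge> 1" by presburger+
    then obtain k where k: "v = 2*k-1" "k \<ge> 1" by blast
    then have "k \<in> beta n \<sigma>" using iS d v by (auto simp: beta_def)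
    then show "v \<in> (\<lambda>k. 2*k-1) ` beta n \<sigma>" using k by blast
  qed
  show "(\<lambda>k. 2*k-1) ` beta n \<sigma> \<subseteq> drop_bottoms \<sigma> (2*n)"
  proof
    fix v assume "v \<in> (\<lambda>k. 2*k-1) ` beta n \<sigma>"
    then obtain k i where "i \<in> {1..2*n}" "\<sigma> i = 2*k-1" "i > 2*k-1" "v = 2*k-1"
      by (auto simp: beta_def)
    then show "v \<in> drop_bottoms \<sigma> (2*n)"
      unfolding drop_bottoms_def by (intro CollectI exI[of _ i]) simp
  qed
qed

lemma dropnum_eq: assumes "\<sigma> \<in> R n" shows "dropnum \<sigma> (2*n) = card (tau n \<sigma>)"
proof -
  have "drops \<sigma> (2*n) = (\<lambda>i. (i, \<sigma> i)) ` drop_tops \<sigma> (2*n)"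
    by (auto simp: drops_def drop_tops_def)
  then have "dropnum \<sigma> (2*n) = card (drop_tops \<sigma> (2*n))"
    by (simp add: dropnum_def card_image inj_on_def)
  also have "\<dots> = card (tau n \<sigma>)" using tops_eq[OF assms] by (simp add: card_image inj_on_def)
  finally show ?thesis .
qed

lemma card_beta: assumes "\<sigma> \<in> R n" shows "card (beta n \<sigma>) = card (tau n \<sigma>)"
proof -
  have "drop_bottoms \<sigma> (2*n) = \<sigma> ` drop_tops \<sigma> (2*n)"
    by (auto simp: drop_bottoms_def drop_tops_def)
  then have "card (drop_bottoms \<sigma> (2*n)) = card (drop_tops \<sigma> (2*n))"
    using permutes_inj[OF R_perm[OF assms]] by (simp add: card_image inj_on_subset)
  moreover have "inj_on (\<lambda>k. 2*k-1) (beta n \<sigma>)" by (auto simp: inj_on_def beta_def)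
  then have "card (drop_bottoms \<sigma> (2*n)) = card (beta n \<sigma>)"
    using bots_eq[OF assms] by (simp add: card_image)
  moreover have "card (drop_tops \<sigma> (2*n)) = card (tau n \<sigma>)"
    using tops_eq[OF assms] by (simp add: card_image inj_on_def)
  ultimately show ?thesis by simp
qed

lemma primary_iff: "primary n \<sigma> \<longleftrightarrow> \<sigma> \<in> R n \<and> tau n \<sigma> \<inter> beta n \<sigma> = {}"
proof (cases "\<sigma> \<in> R n")
  case False then show ?thesis by (simp add: primary_def)
next
  case True
  have "(\<forall>t \<in> drop_tops \<sigma> (2*n). \<forall>b \<in> drop_bottoms \<sigma> (2*n). t > b \<longrightarrow> t - b \<ge> 3)
        \<longleftrightarrow> tau n \<sigma> \<inter> beta n \<sigma> = {}"
  proof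
    assume H: "\<forall>t \<in> drop_tops \<sigma> (2*n). \<forall>b \<in> drop_bottoms \<sigma> (2*n). t > b \<longrightarrow> t - b \<ge> 3"
    show "tau n \<sigma> \<inter> beta n \<sigma> = {}"
    proof (rule ccontr)
      assume "tau n \<sigma> \<inter> beta n \<sigma> \<noteq> {}"
      then obtain k where "k \<in> tau n \<sigma>" "k \<in> beta n \<sigma>" by blast
      then have "2*k \<in> drop_tops \<sigma> (2*n)" "2*k-1 \<in> drop_bottoms \<sigma> (2*n)" "k \<ge> 1"
        using tops_eq[OF True] bots_eq[OF True] by (auto simp: tau_def)
      moreover have "2*k-1 < 2*k" using \<open>k \<ge> 1\<close> by simp
      ultimately have "2*k - (2*k-1) \<ge> 3" using H by blast
      then show False using \<open>k \<ge> 1\<close> by simp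
    qed
  next
    assume D: "tau n \<sigma> \<inter> beta n \<sigma> = {}"
    show "\<forall>t \<in> drop_tops \<sigma> (2*n). \<forall>b \<in> drop_bottoms \<sigma> (2*n). t > b \<longrightarrow> t - b \<ge> 3"
    proof (intro ballI impI)
      fix t b assume t: "t \<in> drop_tops \<sigma> (2*n)" and b: "b \<in> drop_bottoms \<sigma> (2*n)" and tb: "t > b"
      obtain k where k: "k \<in> tau n \<sigma>" "t = 2*k" using t tops_eq[OF True] by auto
      obtain l where l: "l \<in> beta n \<sigma>" "b = 2*l-1" using b bots_eq[OF True] by auto
      have "l \<ge> 1" using l by (simp add: beta_def)
      have "k \<noteq> l" using D k l by blast
      then show "t - b \<ge> 3" using tb k l \<open>l \<ge> 1\<close> by linarith
    qed
  qed
  then show ?thesis using True by (simp add: primary_def)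
qed


definition cls :: "nat \<Rightarrow> nat set \<Rightarrow> nat set \<Rightarrow> (nat \<Rightarrow> nat) set" where
  "cls n X Y = {\<sigma>\<in>R n. tau n \<sigma> = X \<and> beta n \<sigma> = Y}"

lemma beta_pos:
  assumes "\<sigma> permutes {1..2*n}" "k'\<in>{1..n}" "i\<in>{1..2*n}" "\<sigma> i = 2*k'-1"
  shows "k' \<in> beta n \<sigma> \<longleftrightarrow> i > 2*k'-1"
proof
  assume "k' \<in> beta n \<sigma>"
  then obtain j where j: "j\<in>{1..2*n}" "\<sigma> j = 2*k'-1" "j > 2*k'-1" by (auto simp: beta_def)
  then have "j = i" using permutes_inj[OF assms(1)] assms(4) by (metis injD)
  then show "i > 2*k'-1" using j by simp
next
  assume "i > 2*k'-1" then show "k' \<in> beta n \<sigma>" using assms(2-4) by (auto simp: beta_def)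
qed

lemma perm_swap: "\<sigma> permutes S \<Longrightarrow> b\<in>S \<Longrightarrow> p\<in>S \<Longrightarrow> \<sigma> \<circ> transpose b p permutes S"
  by (rule permutes_compose[OF permutes_swap_id])

lemma swap_val: "(\<sigma> \<circ> transpose b p) i = (if i = b then \<sigma> p else if i = p then \<sigma> b else \<sigma> i)"
  by (simp add: transpose_def)

lemma swap_swap: "(\<sigma> \<circ> transpose b p) \<circ> transpose b p = \<sigma>"
  by (auto simp: transpose_def)

lemma beta_swap:
  assumes "\<sigma> permutes {1..2*n}" "b\<in>{1..2*n}" "p\<in>{1..2*n}" "k'\<in>{1..n}" "i\<in>{1..2*n}" "\<sigma> i = 2*k'-1"
  shows "k' \<in> beta n (\<sigma> \<circ> transpose b p) \<longleftrightarrow> transpose b p i > 2*k'-1"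
proof -
  have "(\<sigma> \<circ> transpose b p) (transpose b p i) = 2*k'-1" using assms(6) by (auto simp: transpose_def)
  moreover have "transpose b p i \<in> {1..2*n}" using assms(2,3,5) by (simp add: transpose_def)
  ultimately show ?thesis using beta_pos[OF perm_swap[OF assms(1-3)] assms(4)] by blast
qed

lemma obtain_pos:
  assumes "\<sigma> permutes S" "v \<in> S" obtains i where "i \<in> S" "\<sigma> i = v"
  using permutes_image[OF assms(1)] assms(2) by (metis imageE)

lemma beta_sub: "beta n \<sigma> \<subseteq> {1..n}" by (auto simp: beta_def)
lemma tau_sub: "tau n \<sigma> \<subseteq> {1..n}" by (auto simp: tau_def)

lemma dirA0:
  assumes s: "\<sigma> \<in> cls n X Y" and k: "k\<in>{1..n}" "k\<notin>X" "k\<notin>Y"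
    and p: "p\<in>{1..2*n}" "\<sigma> p = 2*k-1"
  defines "\<rho> \<equiv> \<sigma> \<circ> transpose (2*k) p"
  shows "\<rho> \<in> cls n (insert k X) (insert k Y)" "\<rho> (2*k) = 2*k-1" "p < 2*k" "\<rho> p \<ge> 2*k"
proof -
  have sR: "\<sigma> \<in> R n" and tX: "tau n \<sigma> = X" and bY: "beta n \<sigma> = Y" using s by (auto simp: cls_def)
  have perm: "\<sigma> permutes {1..2*n}" using R_perm[OF sR] .
  have bS: "2*k \<in> {1..2*n}" using k by auto
  have "\<not> p > 2*k-1" using beta_pos[OF perm k(1) p] k(3) bY by blast
  then show pl: "p < 2*k" using k by auto
  have sb: "\<sigma> (2*k) \<ge> 2*k" using k(1,2) tX by (auto simp: tau_def)
  have rv: "\<And>i. \<rho> i = (if i = 2*k then \<sigma> p else if i = p then \<sigma> (2*k) else \<sigma> i)"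
    unfolding \<rho>_def by (rule swap_val)
  show rb: "\<rho> (2*k) = 2*k-1" using rv p by simp
  show "\<rho> p \<ge> 2*k" using rv pl sb by simp
  have rperm: "\<rho> permutes {1..2*n}" unfolding \<rho>_def using perm_swap[OF perm bS p(1)] .
  have "\<forall>i\<in>{1..2*n}. \<rho> i < i \<longrightarrow> even i \<and> odd (\<rho> i)"
  proof (intro ballI impI)
    fix i assume i: "i \<in> {1..2*n}" "\<rho> i < i"
    show "even i \<and> odd (\<rho> i)"
    proof (cases "i = 2*k")
      case True then show ?thesis using rb k by auto
    next
      case False
      then show ?thesis using i rv[of i] pl sb R_drop[OF sR i(1)] by (auto split: if_splits)
    qed
  qed
  then have rR: "\<rho> \<in> R n" using rperm by (simp add: R_def)
  have tt: "tau n \<rho> = insert k X"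
  proof (rule set_eqI)
    fix k' show "k' \<in> tau n \<rho> \<longleftrightarrow> k' \<in> insert k X"
    proof (cases "k' = k")
      case True then show ?thesis using rb k by (auto simp: tau_def)
    next
      case False
      then have "2*k' \<noteq> 2*k" by simp
      then show ?thesis using False rv[of "2*k'"] p pl sb tX
        by (auto simp: tau_def)
    qed
  qed
  have bt: "beta n \<rho> = insert k Y"
  proof (rule set_eqI)
    fix k' show "k' \<in> beta n \<rho> \<longleftrightarrow> k' \<in> insert k Y"
    proof (cases "k' \<in> {1..n}")
      case False then show ?thesis using k(1) beta_sub[of n \<rho>] beta_sub[of n \<sigma>] bY by blast
    next
      case True
      have vS: "2*k'-1 \<in> {1..2*n}" using True by auto
      obtain i where i: "i \<in> {1..2*n}" "\<sigma> i = 2*k'-1" using obtain_pos[OF perm vS] by blast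
      have e1: "k' \<in> beta n \<rho> \<longleftrightarrow> transpose (2*k) p i > 2*k'-1"
        unfolding \<rho>_def by (rule beta_swap[OF perm bS p(1) True i])
      have e2: "k' \<in> Y \<longleftrightarrow> i > 2*k'-1" using beta_pos[OF perm True i] bY by simp
      show ?thesis
      proof (cases "i = p")
        case True
        then have "k' = k" using i p by simp
        then show ?thesis using e1 True k by (simp add: transpose_def)
      next
        case ip: False
        have "k' \<noteq> k" using ip i p permutes_inj[OF perm] by (metis injD)
        show ?thesis
        proof (cases "i = 2*k")
          case True
          then show ?thesis using e1 e2 \<open>k' \<noteq> k\<close> i sb pl by (auto simp: transpose_def)
        next
          case False
          then show ?thesis using e1 e2 \<open>k' \<noteq> k\<close> ip by (auto simp: transpose_def)
        qed
      qed
    qed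
  qed
  show "\<rho> \<in> cls n (insert k X) (insert k Y)" using rR tt bt by (simp add: cls_def)
qed

lemma dirB0:
  assumes r: "\<rho> \<in> cls n (insert k X) (insert k Y)" "\<rho> (2*k) = 2*k-1"
    and k: "k\<in>{1..n}" "k\<notin>X" "k\<notin>Y"
    and p: "p\<in>{1..2*n}" "p < 2*k" "\<rho> p \<ge> 2*k"
  defines "\<sigma> \<equiv> \<rho> \<circ> transpose (2*k) p"
  shows "\<sigma> \<in> cls n X Y"
proof -
  have rR: "\<rho> \<in> R n" and tX: "tau n \<rho> = insert k X" and bY: "beta n \<rho> = insert k Y"
    using r by (auto simp: cls_def)
  have perm: "\<rho> permutes {1..2*n}" using R_perm[OF rR] .
  have bS: "2*k \<in> {1..2*n}" using k by auto
  have sv: "\<And>i. \<sigma> i = (if i = 2*k then \<rho> p else if i = p then \<rho> (2*k) else \<rho> i)"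
    unfolding \<sigma>_def by (rule swap_val)
  have sperm: "\<sigma> permutes {1..2*n}" unfolding \<sigma>_def using perm_swap[OF perm bS p(1)] .
  have "\<forall>i\<in>{1..2*n}. \<sigma> i < i \<longrightarrow> even i \<and> odd (\<sigma> i)"
  proof (intro ballI impI)
    fix i assume i: "i \<in> {1..2*n}" "\<sigma> i < i"
    show "even i \<and> odd (\<sigma> i)"
      using i sv[of i] p r(2) R_drop[OF rR i(1)] by (auto split: if_splits)
  qed
  then have sR: "\<sigma> \<in> R n" using sperm by (simp add: R_def)
  have tt: "tau n \<sigma> = X"
  proof (rule set_eqI)
    fix k' show "k' \<in> tau n \<sigma> \<longleftrightarrow> k' \<in> X"
    proof (cases "k' = k")
      case True
      have "\<sigma> (2*k) \<ge> 2*k" using sv[of "2*k"] p by simp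
      then have "k \<notin> tau n \<sigma>" by (simp add: tau_def)
      then show ?thesis using True k(2) by simp
    next
      case False
      then have e: "k' \<in> X \<longleftrightarrow> k' \<in> tau n \<rho>" using tX by auto
      have ne: "2*k' \<noteq> 2*k" using False by simp
      show ?thesis
      proof (cases "2*k' = p")
        case True
        have "\<sigma> (2*k') = 2*k-1" using sv[of "2*k'"] ne True r(2) by simp
        then have "k' \<notin> tau n \<sigma>" using True p by (simp add: tau_def)
        moreover have "k' \<notin> tau n \<rho>" using True p by (simp add: tau_def)
        ultimately show ?thesis using e by simp
      next
        case False
        have "\<sigma> (2*k') = \<rho> (2*k')" using sv[of "2*k'"] ne False by simp
        then show ?thesis using e by (simp add: tau_def)
      qed
    qed
  qed
  have bt: "beta n \<sigma> = Y"
  proof (rule set_eqI)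
    fix k' show "k' \<in> beta n \<sigma> \<longleftrightarrow> k' \<in> Y"
    proof (cases "k' \<in> {1..n}")
      case False then show ?thesis using beta_sub[of n \<sigma>] beta_sub[of n \<rho>] bY by blast
    next
      case True
      have vS: "2*k'-1 \<in> {1..2*n}" using True by auto
      obtain i where i: "i \<in> {1..2*n}" "\<rho> i = 2*k'-1" using obtain_pos[OF perm vS] by blast
      have e1: "k' \<in> beta n \<sigma> \<longleftrightarrow> transpose (2*k) p i > 2*k'-1"
        unfolding \<sigma>_def by (rule beta_swap[OF perm bS p(1) True i])
      have e2: "k' \<in> insert k Y \<longleftrightarrow> i > 2*k'-1" using beta_pos[OF perm True i] bY by simp
      show ?thesis
      proof (cases "i = 2*k")
        case True
        then have "k' = k" using i r(2) by simp
        then show ?thesis using e1 True k p by (auto simp: transpose_def)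
      next
        case ib: False
        have "k' \<noteq> k" using ib i r(2) permutes_inj[OF perm] by (metis injD)
        show ?thesis
        proof (cases "i = p")
          case True
          then show ?thesis using e1 e2 \<open>k' \<noteq> k\<close> i p by (auto simp: transpose_def)
        next
          case False
          then show ?thesis using e1 e2 \<open>k' \<noteq> k\<close> ib by (auto simp: transpose_def)
        qed
      qed
    qed
  qed
  show "\<sigma> \<in> cls n X Y" using sR tt bt by (simp add: cls_def)
qed

lemma dirA1:
  assumes s: "\<sigma> \<in> cls n (insert k X) (insert k Y)" and k: "k\<in>{1..n}"
    and t: "t\<in>{1..2*n}" "\<sigma> t = 2*k-1"
  defines "\<rho> \<equiv> \<sigma> \<circ> transpose (2*k) t"
  shows "\<rho> \<in> cls n (insert k X) (insert k Y)" "\<rho> (2*k) = 2*k-1" "t \<ge> 2*k" "\<rho> t < 2*k"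
proof -
  have sR: "\<sigma> \<in> R n" and tX: "tau n \<sigma> = insert k X" and bY: "beta n \<sigma> = insert k Y"
    using s by (auto simp: cls_def)
  have perm: "\<sigma> permutes {1..2*n}" using R_perm[OF sR] .
  have bS: "2*k \<in> {1..2*n}" using k by auto
  have "t > 2*k-1" using beta_pos[OF perm k(1) t] bY by blast
  then show tl: "t \<ge> 2*k" using k by auto
  have sb: "\<sigma> (2*k) < 2*k" using k(1) tX by (auto simp: tau_def)
  have rv: "\<And>i. \<rho> i = (if i = 2*k then \<sigma> t else if i = t then \<sigma> (2*k) else \<sigma> i)"
    unfolding \<rho>_def by (rule swap_val)
  show rb: "\<rho> (2*k) = 2*k-1" using rv t by simp
  show "\<rho> t < 2*k" using rv sb t by simp
  have rperm: "\<rho> permutes {1..2*n}" unfolding \<rho>_def using perm_swap[OF perm bS t(1)] .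
  have sbd: "even (2*k) \<and> odd (\<sigma> (2*k))" using R_drop[OF sR bS sb] .
  have std: "t \<noteq> 2*k \<Longrightarrow> even t" using R_drop[OF sR t(1)] t tl by simp
  have "\<forall>i\<in>{1..2*n}. \<rho> i < i \<longrightarrow> even i \<and> odd (\<rho> i)"
  proof (intro ballI impI)
    fix i assume i: "i \<in> {1..2*n}" "\<rho> i < i"
    show "even i \<and> odd (\<rho> i)"
    proof (cases "i = 2*k")
      case True then show ?thesis using rb k by auto
    next
      case False
      then show ?thesis using i rv[of i] sbd std R_drop[OF sR i(1)] by (auto split: if_splits)
    qed
  qed
  then have rR: "\<rho> \<in> R n" using rperm by (simp add: R_def)
  have tt: "tau n \<rho> = insert k X"
  proof (rule set_eqI)
    fix k' show "k' \<in> tau n \<rho> \<longleftrightarrow> k' \<in> insert k X"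
    proof (cases "k' = k")
      case True then show ?thesis using rb k by (auto simp: tau_def)
    next
      case False
      then have e: "k' \<in> insert k X \<longleftrightarrow> k' \<in> tau n \<sigma>" using tX by auto
      have ne: "2*k' \<noteq> 2*k" using False by simp
      show ?thesis
      proof (cases "2*k' = t")
        case True
        have k'n: "k' \<in> {1..n}" using True t(1) by auto
        have "\<rho> (2*k') = \<sigma> (2*k)" using rv[of "2*k'"] ne True by simp
        then have "k' \<in> tau n \<rho>" using True tl sb k'n by (simp add: tau_def)
        moreover have "k' \<in> tau n \<sigma>" using True t tl k'n k by (simp add: tau_def)
        ultimately show ?thesis using e by simp
      next
        case False
        have "\<rho> (2*k') = \<sigma> (2*k')" using rv[of "2*k'"] ne False by simp
        then show ?thesis using e by (simp add: tau_def)
      qed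
    qed
  qed
  have bt: "beta n \<rho> = insert k Y"
  proof (rule set_eqI)
    fix k' show "k' \<in> beta n \<rho> \<longleftrightarrow> k' \<in> insert k Y"
    proof (cases "k' \<in> {1..n}")
      case False then show ?thesis using beta_sub[of n \<rho>] beta_sub[of n \<sigma>] bY by blast
    next
      case True
      have vS: "2*k'-1 \<in> {1..2*n}" using True by auto
      obtain i where i: "i \<in> {1..2*n}" "\<sigma> i = 2*k'-1" using obtain_pos[OF perm vS] by blast
      have e1: "k' \<in> beta n \<rho> \<longleftrightarrow> transpose (2*k) t i > 2*k'-1"
        unfolding \<rho>_def by (rule beta_swap[OF perm bS t(1) True i])
      have e2: "k' \<in> insert k Y \<longleftrightarrow> i > 2*k'-1" using beta_pos[OF perm True i] bY by simp
      show ?thesis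
      proof (cases "i = t")
        case True
        then show ?thesis using e1 e2 tl i t k by (auto simp: transpose_def)
      next
        case it: False
        show ?thesis
        proof (cases "i = 2*k")
          case True
          then show ?thesis using e1 e2 i sb tl it by (auto simp: transpose_def)
        next
          case False
          then show ?thesis using e1 e2 it by (auto simp: transpose_def)
        qed
      qed
    qed
  qed
  show "\<rho> \<in> cls n (insert k X) (insert k Y)" using rR tt bt by (simp add: cls_def)
qed

lemma dirB1:
  assumes r: "\<rho> \<in> cls n (insert k X) (insert k Y)" "\<rho> (2*k) = 2*k-1"
    and k: "k\<in>{1..n}"
    and t: "t\<in>{1..2*n}" "t \<ge> 2*k" "\<rho> t < 2*k"
  defines "\<sigma> \<equiv> \<rho> \<circ> transpose (2*k) t"
  shows "\<sigma> \<in> cls n (insert k X) (insert k Y)"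
proof -
  have rR: "\<rho> \<in> R n" and tX: "tau n \<rho> = insert k X" and bY: "beta n \<rho> = insert k Y"
    using r by (auto simp: cls_def)
  have perm: "\<rho> permutes {1..2*n}" using R_perm[OF rR] .
  have bS: "2*k \<in> {1..2*n}" using k by auto
  have sv: "\<And>i. \<sigma> i = (if i = 2*k then \<rho> t else if i = t then \<rho> (2*k) else \<rho> i)"
    unfolding \<sigma>_def by (rule swap_val)
  have sperm: "\<sigma> permutes {1..2*n}" unfolding \<sigma>_def using perm_swap[OF perm bS t(1)] .
  have rtd: "t \<noteq> 2*k \<Longrightarrow> even t \<and> odd (\<rho> t)" using R_drop[OF rR t(1)] t by simp
  have rto: "odd (\<rho> t)" using rtd r(2) k by (cases "t = 2*k") auto
  have "\<forall>i\<in>{1..2*n}. \<sigma> i < i \<longrightarrow> even i \<and> odd (\<sigma> i)"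
  proof (intro ballI impI)
    fix i assume i: "i \<in> {1..2*n}" "\<sigma> i < i"
    show "even i \<and> odd (\<sigma> i)"
    proof (cases "i = 2*k")
      case True then show ?thesis using sv[of i] rto by auto
    next
      case False
      then show ?thesis using i sv[of i] r(2) rtd k R_drop[OF rR i(1)] by (auto split: if_splits)
    qed
  qed
  then have sR: "\<sigma> \<in> R n" using sperm by (simp add: R_def)
  have tt: "tau n \<sigma> = insert k X"
  proof (rule set_eqI)
    fix k' show "k' \<in> tau n \<sigma> \<longleftrightarrow> k' \<in> insert k X"
    proof (cases "k' = k")
      case True
      have "\<sigma> (2*k) < 2*k" using sv[of "2*k"] t by simp
      then show ?thesis using True k by (simp add: tau_def)
    next
      case False
      then have e: "k' \<in> insert k X \<longleftrightarrow> k' \<in> tau n \<rho>" using tX by auto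
      have ne: "2*k' \<noteq> 2*k" using False by simp
      show ?thesis
      proof (cases "2*k' = t")
        case True
        have k'n: "k' \<in> {1..n}" using True t(1) by auto
        have "\<sigma> (2*k') = 2*k-1" using sv[of "2*k'"] ne True r(2) by simp
        then have "k' \<in> tau n \<sigma>" using True t k'n k by (simp add: tau_def)
        moreover have "k' \<in> tau n \<rho>" using True t k'n by (simp add: tau_def)
        ultimately show ?thesis using e by simp
      next
        case False
        have "\<sigma> (2*k') = \<rho> (2*k')" using sv[of "2*k'"] ne False by simp
        then show ?thesis using e by (simp add: tau_def)
      qed
    qed
  qed
  have bt: "beta n \<sigma> = insert k Y"
  proof (rule set_eqI)
    fix k' show "k' \<in> beta n \<sigma> \<longleftrightarrow> k' \<in> insert k Y"
    proof (cases "k' \<in> {1..n}")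
      case False then show ?thesis using beta_sub[of n \<sigma>] beta_sub[of n \<rho>] bY by blast
    next
      case True
      have vS: "2*k'-1 \<in> {1..2*n}" using True by auto
      obtain i where i: "i \<in> {1..2*n}" "\<rho> i = 2*k'-1" using obtain_pos[OF perm vS] by blast
      have e1: "k' \<in> beta n \<sigma> \<longleftrightarrow> transpose (2*k) t i > 2*k'-1"
        unfolding \<sigma>_def by (rule beta_swap[OF perm bS t(1) True i])
      have e2: "k' \<in> insert k Y \<longleftrightarrow> i > 2*k'-1" using beta_pos[OF perm True i] bY by simp
      show ?thesis
      proof (cases "i = 2*k")
        case True
        then have "k' = k" using i r(2) by simp
        then show ?thesis using e1 e2 True k t by (auto simp: transpose_def)
      next
        case ib: False
        show ?thesis
        proof (cases "i = t")
          case True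
          then show ?thesis using e1 e2 i t ib by (auto simp: transpose_def)
        next
          case False
          then show ?thesis using e1 e2 ib by (auto simp: transpose_def)
        qed
      qed
    qed
  qed
  show "\<sigma> \<in> cls n (insert k X) (insert k Y)" using sR tt bt by (simp add: cls_def)
qed


lemma cross_count:
  assumes perm: "\<rho> permutes S" and fin: "finite S" and LS: "L \<subseteq> S"
  shows "card {i\<in>L. \<rho> i \<notin> L} = card {i\<in>S-L. \<rho> i \<in> L}"
proof -
  let ?A1 = "{i\<in>L. \<rho> i \<in> L}" and ?A2 = "{i\<in>L. \<rho> i \<notin> L}" and ?C = "{i\<in>S-L. \<rho> i \<in> L}"
  have fL: "finite L" using fin LS finite_subset by blast
  have "L = ?A1 \<union> ?A2" by blast
  then have c1: "card L = card ?A1 + card ?A2"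
    using fL by (metis (no_types, lifting) card_Un_disjoint disjoint_iff finite_subset mem_Collect_eq subsetI)
  have B: "{i\<in>S. \<rho> i \<in> L} = ?A1 \<union> ?C" using LS by blast
  have "card {i\<in>S. \<rho> i \<in> L} = card ?A1 + card ?C"
    unfolding B using fin LS by (intro card_Un_disjoint) (auto intro: rev_finite_subset[OF fin])
  moreover have "bij_betw \<rho> {i\<in>S. \<rho> i \<in> L} L"
  proof (rule bij_betw_imageI)
    show "inj_on \<rho> {i\<in>S. \<rho> i \<in> L}" using inj_on_subset[OF permutes_inj[OF perm] subset_UNIV] .
    show "\<rho> ` {i\<in>S. \<rho> i \<in> L} = L"
    proof
      show "\<rho> ` {i\<in>S. \<rho> i \<in> L} \<subseteq> L" by blast
      show "L \<subseteq> \<rho> ` {i\<in>S. \<rho> i \<in> L}"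
      proof
        fix v assume v: "v \<in> L"
        then obtain i where "i \<in> S" "\<rho> i = v" using obtain_pos[OF perm] LS by blast
        then show "v \<in> \<rho> ` {i\<in>S. \<rho> i \<in> L}" using v by blast
      qed
    qed
  qed
  then have "card {i\<in>S. \<rho> i \<in> L} = card L" by (rule bij_betw_same_card)
  ultimately show ?thesis using c1 by simp
qed

lemma finite_R: "finite (R n)"
proof -
  have "R n \<subseteq> {p. p permutes {1..2*n}}" by (auto simp: R_def)
  then show ?thesis using finite_permutations[of "{1..2*n}"] finite_subset by auto
qed

lemma finite_cls: "finite (cls n X Y)"
  using finite_R finite_subset[of "cls n X Y" "R n"] by (auto simp: cls_def)

lemma toggle:
  assumes k: "k\<in>{1..n}" "k\<notin>X" "k\<notin>Y"
  shows "card (cls n (insert k X) (insert k Y)) = card (cls n X Y)"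
proof -
  define S where "S = {1..2*n}"
  define M where "M = {\<rho>\<in>cls n (insert k X) (insert k Y). \<rho> (2*k) = 2*k-1}"
  define P0 where "P0 \<rho> = {p\<in>S. p < 2*k \<and> \<rho> p \<ge> 2*k}" for \<rho> :: "nat \<Rightarrow> nat"
  define P1 where "P1 \<rho> = {t\<in>S. t \<ge> 2*k \<and> \<rho> t < 2*k}" for \<rho> :: "nat \<Rightarrow> nat"
  define h where "h = (\<lambda>(\<rho>::nat\<Rightarrow>nat,p::nat). \<rho> \<circ> transpose (2*k) p)"
  have bS: "2*k \<in> S" and aS: "2*k-1 \<in> S" using k by (auto simp: S_def)
  have injh: "inj_on h (SIGMA \<rho>:M. P \<rho>)" if PS: "\<And>\<rho>. P \<rho> \<subseteq> S" for P
  proof (rule inj_onI)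
    fix x y
    assume a0: "x \<in> (SIGMA \<rho>:M. P \<rho>)" "y \<in> (SIGMA \<rho>:M. P \<rho>)" "h x = h y"
    obtain \<rho> p where x: "x = (\<rho>, p)" by (cases x)
    obtain \<rho>' p' where y: "y = (\<rho>', p')" by (cases y)
    have a: "(\<rho>, p) \<in> (SIGMA \<rho>:M. P \<rho>)" "(\<rho>', p') \<in> (SIGMA \<rho>:M. P \<rho>)" "h (\<rho>, p) = h (\<rho>', p')"
      using a0 x y by auto
    have rM: "\<rho> \<in> M" "\<rho>' \<in> M" "p \<in> S" "p' \<in> S" using a PS by auto
    have rp: "\<rho> permutes S" "\<rho>' permutes S" using rM by (auto simp: M_def cls_def S_def R_def)
    define \<sigma> where "\<sigma> = \<rho> \<circ> transpose (2*k) p"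
    have e: "\<sigma> = \<rho>' \<circ> transpose (2*k) p'" using a(3) by (simp add: h_def \<sigma>_def)
    have "\<sigma> p = 2*k-1" using rM by (simp add: \<sigma>_def swap_val M_def)
    moreover have "\<sigma> p' = 2*k-1" using rM by (simp add: e swap_val M_def)
    moreover have "\<sigma> permutes S" unfolding \<sigma>_def by (rule perm_swap[OF rp(1) bS rM(3)])
    ultimately have pp: "p = p'" by (metis permutes_inj injD)
    have "\<rho> = \<sigma> \<circ> transpose (2*k) p" by (simp add: \<sigma>_def swap_swap)
    also have "\<dots> = \<rho>'" using e pp by (simp add: swap_swap)
    finally show "x = y" using pp x y by simp
  qed
  have bij0: "bij_betw h (SIGMA \<rho>:M. P0 \<rho>) (cls n X Y)"
  proof (rule bij_betw_imageI)
    show "inj_on h (SIGMA \<rho>:M. P0 \<rho>)" by (rule injh) (auto simp: P0_def)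
    show "h ` (SIGMA \<rho>:M. P0 \<rho>) = cls n X Y"
    proof
      show "h ` (SIGMA \<rho>:M. P0 \<rho>) \<subseteq> cls n X Y"
      proof clarify
        fix \<rho> p assume "\<rho> \<in> M" "p \<in> P0 \<rho>"
        then show "h (\<rho>, p) \<in> cls n X Y"
          unfolding h_def using dirB0[OF _ _ k, of \<rho> p] by (auto simp: M_def P0_def S_def)
      qed
      show "cls n X Y \<subseteq> h ` (SIGMA \<rho>:M. P0 \<rho>)"
      proof
        fix \<sigma> assume s: "\<sigma> \<in> cls n X Y"
        then have "\<sigma> permutes S" by (auto simp: cls_def R_def S_def)
        then obtain p where p: "p \<in> S" "\<sigma> p = 2*k-1" using obtain_pos aS by metis
        note D = dirA0[OF s k, of p]
        have "(\<sigma> \<circ> transpose (2*k) p, p) \<in> (SIGMA \<rho>:M. P0 \<rho>)"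
          using D p by (auto simp: M_def P0_def S_def)
        moreover have "h (\<sigma> \<circ> transpose (2*k) p, p) = \<sigma>" by (simp add: h_def swap_swap)
        ultimately show "\<sigma> \<in> h ` (SIGMA \<rho>:M. P0 \<rho>)" by (metis image_eqI)
      qed
    qed
  qed
  have bij1: "bij_betw h (SIGMA \<rho>:M. P1 \<rho>) (cls n (insert k X) (insert k Y))"
  proof (rule bij_betw_imageI)
    show "inj_on h (SIGMA \<rho>:M. P1 \<rho>)" by (rule injh) (auto simp: P1_def)
    show "h ` (SIGMA \<rho>:M. P1 \<rho>) = cls n (insert k X) (insert k Y)"
    proof
      show "h ` (SIGMA \<rho>:M. P1 \<rho>) \<subseteq> cls n (insert k X) (insert k Y)"
      proof clarify
        fix \<rho> p assume "\<rho> \<in> M" "p \<in> P1 \<rho>"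
        then show "h (\<rho>, p) \<in> cls n (insert k X) (insert k Y)"
          unfolding h_def using dirB1[OF _ _ k(1), of \<rho> X Y p] by (auto simp: M_def P1_def S_def)
      qed
      show "cls n (insert k X) (insert k Y) \<subseteq> h ` (SIGMA \<rho>:M. P1 \<rho>)"
      proof
        fix \<sigma> assume s: "\<sigma> \<in> cls n (insert k X) (insert k Y)"
        then have "\<sigma> permutes S" by (auto simp: cls_def R_def S_def)
        then obtain p where p: "p \<in> S" "\<sigma> p = 2*k-1" using obtain_pos aS by metis
        note D = dirA1[OF s k(1), of p]
        have "(\<sigma> \<circ> transpose (2*k) p, p) \<in> (SIGMA \<rho>:M. P1 \<rho>)"
          using D p by (auto simp: M_def P1_def S_def)
        moreover have "h (\<sigma> \<circ> transpose (2*k) p, p) = \<sigma>" by (simp add: h_def swap_swap)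
        ultimately show "\<sigma> \<in> h ` (SIGMA \<rho>:M. P1 \<rho>)" by (metis image_eqI)
      qed
    qed
  qed
  have fM: "finite M" using finite_cls[of n "insert k X" "insert k Y"] by (auto simp: M_def)
  have fP: "finite (P0 \<rho>)" "finite (P1 \<rho>)" for \<rho> by (auto simp: P0_def P1_def S_def)
  have eq: "card (P0 \<rho>) = card (P1 \<rho>)" if r: "\<rho> \<in> M" for \<rho>
  proof -
    have rp: "\<rho> permutes S" using r by (auto simp: M_def cls_def S_def R_def)
    let ?L = "{i\<in>S. i < 2*k}"
    have LS: "?L \<subseteq> S" by auto
    have fS: "finite S" by (simp add: S_def)
    have c: "card {i\<in>?L. \<rho> i \<notin> ?L} = card {i\<in>S-?L. \<rho> i \<in> ?L}" by (rule cross_count[OF rp fS LS])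
    have "P0 \<rho> = {i\<in>?L. \<rho> i \<notin> ?L}"
      using permutes_in_image[OF rp] by (auto simp: P0_def)
    moreover have "P1 \<rho> = {i\<in>S-?L. \<rho> i \<in> ?L}"
      using permutes_in_image[OF rp] by (auto simp: P1_def)
    ultimately show ?thesis using c by simp
  qed
  have "card (cls n X Y) = card (SIGMA \<rho>:M. P0 \<rho>)" using bij_betw_same_card[OF bij0] by simp
  also have "\<dots> = (\<Sum>\<rho>\<in>M. card (P0 \<rho>))" using fM fP by simp
  also have "\<dots> = (\<Sum>\<rho>\<in>M. card (P1 \<rho>))" using eq by (rule sum.cong[OF refl])
  also have "\<dots> = card (SIGMA \<rho>:M. P1 \<rho>)" using fM fP by simp
  also have "\<dots> = card (cls n (insert k X) (insert k Y))" using bij_betw_same_card[OF bij1] by simp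
  finally show ?thesis by simp
qed


lemma toggle_iter:
  assumes "Z \<subseteq> {1..n}" "X \<inter> Z = {}" "Y \<inter> Z = {}"
  shows "card (cls n (X \<union> Z) (Y \<union> Z)) = card (cls n X Y)"
proof -
  have "finite Z" using assms(1) finite_subset by blast
  then show ?thesis using assms
  proof (induction Z rule: finite_induct)
    case empty then show ?case by simp
  next
    case (insert z Z)
    have "card (cls n (X \<union> insert z Z) (Y \<union> insert z Z)) = card (cls n (insert z (X \<union> Z)) (insert z (Y \<union> Z)))"
      by simp
    also have "\<dots> = card (cls n (X \<union> Z) (Y \<union> Z))"
      using insert by (intro toggle) auto
    also have "\<dots> = card (cls n X Y)" using insert by auto
    finally show ?case .
  qed
qed

lemma pow_sum:
  assumes "finite A"
  shows "(\<Sum>Z\<in>Pow A. [:0,1:] ^ card Z) = ([:1,1:] :: int poly) ^ card A"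
  using assms
proof (induction A rule: finite_induct)
  case empty then show ?case by simp
next
  case (insert a A)
  have disj: "Pow A \<inter> insert a ` Pow A = {}" using insert by auto
  have inj: "inj_on (insert a) (Pow A)" using insert by (auto simp: inj_on_def)
  have "(\<Sum>Z\<in>Pow (insert a A). [:0,1:] ^ card Z) =
        (\<Sum>Z\<in>Pow A. [:0,1:] ^ card Z) + (\<Sum>Z\<in>insert a ` Pow A. ([:0,1:] :: int poly) ^ card Z)"
    unfolding Pow_insert using insert disj by (intro sum.union_disjoint) auto
  also have "(\<Sum>Z\<in>insert a ` Pow A. ([:0,1:] :: int poly) ^ card Z) = (\<Sum>Z\<in>Pow A. [:0,1:] ^ card (insert a Z))"
    using inj by (simp add: sum.reindex)
  also have "\<dots> = (\<Sum>Z\<in>Pow A. [:0,1:] * [:0,1:] ^ card Z)"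
  proof (rule sum.cong[OF refl])
    fix Z assume "Z \<in> Pow A"
    then have "finite Z" "a \<notin> Z" using insert finite_subset by auto
    then have "card (insert a Z) = Suc (card Z)" by simp
    then show "([:0,1:] :: int poly) ^ card (insert a Z) = [:0,1:] * [:0,1:] ^ card Z" by simp
  qed
  also have "(\<Sum>Z\<in>Pow A. [:0,1:] ^ card Z) + (\<Sum>Z\<in>Pow A. [:0,1:] * [:0,1:] ^ card Z)
     = (1 + [:0,1:]) * ([:1,1:] :: int poly) ^ card A"
  proof -
    have "(\<Sum>Z\<in>Pow A. [:0,1:] * [:0,1:] ^ card Z) = [:0,1:] * ([:1,1:] :: int poly) ^ card A"
      by (simp only: sum_distrib_left[symmetric] insert.IH)
    then show ?thesis using insert.IH by (metis distrib_right mult_1_left)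
  qed
  also have "(1 + [:0,1:]) = ([:1,1:] :: int poly)" by (simp add: one_pCons)
  finally show ?case using insert by simp
qed


abbreviation "cc n q \<equiv> card (cls n (fst q) (snd q))"

lemma step2:
  "(\<Sum>\<sigma>\<in>R n. ([:0,1:] :: int poly) ^ dropnum \<sigma> (2*n)) =
   (\<Sum>q\<in>Pow {1..n} \<times> Pow {1..n}. of_nat (cc n q) * [:0,1:] ^ card (fst q))"
proof -
  have "(\<Sum>\<sigma>\<in>R n. ([:0,1:] :: int poly) ^ dropnum \<sigma> (2*n)) = (\<Sum>\<sigma>\<in>R n. [:0,1:] ^ card (tau n \<sigma>))"
    by (rule sum.cong) (simp_all add: dropnum_eq)
  also have "\<dots> = (\<Sum>q\<in>Pow {1..n} \<times> Pow {1..n}. \<Sum>\<sigma>\<in>{\<sigma>. \<sigma> \<in> R n \<and> (tau n \<sigma>, beta n \<sigma>) = q}. [:0,1:] ^ card (tau n \<sigma>))"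
    by (rule sum.group[symmetric]) (auto simp: finite_R dest: subsetD[OF tau_sub] subsetD[OF beta_sub])
  also have "\<dots> = (\<Sum>q\<in>Pow {1..n} \<times> Pow {1..n}. of_nat (cc n q) * [:0,1:] ^ card (fst q))"
  proof (rule sum.cong[OF refl])
    fix q :: "nat set \<times> nat set"
    have e: "{\<sigma>. \<sigma> \<in> R n \<and> (tau n \<sigma>, beta n \<sigma>) = q} = cls n (fst q) (snd q)"
      by (cases q) (auto simp: cls_def)
    have "(\<Sum>\<sigma>\<in>cls n (fst q) (snd q). ([:0,1:] :: int poly) ^ card (tau n \<sigma>)) =
          (\<Sum>\<sigma>\<in>cls n (fst q) (snd q). [:0,1:] ^ card (fst q))"
      by (rule sum.cong) (auto simp: cls_def)
    then show "(\<Sum>\<sigma>\<in>{\<sigma>. \<sigma> \<in> R n \<and> (tau n \<sigma>, beta n \<sigma>) = q}. ([:0,1:] :: int poly) ^ card (tau n \<sigma>)) =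
          of_nat (cc n q) * [:0,1:] ^ card (fst q)"
      unfolding e by simp
  qed
  finally show ?thesis .
qed

lemma step3:
  "(\<Sum>q\<in>Pow {1..n} \<times> Pow {1..n}. of_nat (cc n q) * ([:0,1:] :: int poly) ^ card (fst q)) =
   (\<Sum>q\<in>{q\<in>Pow {1..n} \<times> Pow {1..n}. fst q \<inter> snd q = {}}.
        of_nat (cc n q) * [:0,1:] ^ card (fst q) * [:1,1:] ^ card ({1..n} - fst q - snd q))"
  (is "?L = ?R")
proof -
  let ?N = "{1..n}"
  let ?U = "Pow ?N \<times> Pow ?N"
  let ?D = "{q\<in>?U. fst q \<inter> snd q = {}}"
  let ?B = "\<lambda>q. Pow (?N - fst q - snd q)"
  let ?F = "\<lambda>q. of_nat (cc n q) * ([:0,1:] :: int poly) ^ card (fst q)"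
  have "?L = (\<Sum>p\<in>(SIGMA q:?D. ?B q). ?F (fst (fst p) \<union> snd p, snd (fst p) \<union> snd p))"
    by (rule sum.reindex_bij_witness[symmetric, where
        j = "\<lambda>p. (fst (fst p) \<union> snd p, snd (fst p) \<union> snd p)" and
        i = "\<lambda>q. ((fst q - snd q, snd q - fst q), fst q \<inter> snd q)"]) auto
  also have "\<dots> = (\<Sum>q\<in>?D. \<Sum>Z\<in>?B q. ?F (fst q \<union> Z, snd q \<union> Z))"
    by (subst sum.Sigma) (auto simp: split_def)
  also have "\<dots> = ?R"
  proof (rule sum.cong[OF refl])
    fix q assume q: "q \<in> ?D"
    have "(\<Sum>Z\<in>?B q. ?F (fst q \<union> Z, snd q \<union> Z)) =
          (\<Sum>Z\<in>?B q. of_nat (cc n q) * [:0,1:] ^ card (fst q) * [:0,1:] ^ card Z)"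
    proof (rule sum.cong[OF refl])
      fix Z assume Z: "Z \<in> ?B q"
      have c1: "card (cls n (fst q \<union> Z) (snd q \<union> Z)) = cc n q"
        using Z by (intro toggle_iter) auto
      have "fst q \<subseteq> {1..n}" "Z \<subseteq> {1..n}" using q Z by auto
      then have "finite (fst q)" "finite Z" using finite_subset by auto
      then have c2: "card (fst q \<union> Z) = card (fst q) + card Z" using Z by (intro card_Un_disjoint) auto
      show "?F (fst q \<union> Z, snd q \<union> Z) = of_nat (cc n q) * [:0,1:] ^ card (fst q) * [:0,1:] ^ card Z"
        using c1 c2 by (simp add: power_add mult.assoc)
    qed
    also have "\<dots> = of_nat (cc n q) * [:0,1:] ^ card (fst q) * (\<Sum>Z\<in>?B q. [:0,1:] ^ card Z)"
      by (simp only: sum_distrib_left)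
    also have "\<dots> = of_nat (cc n q) * [:0,1:] ^ card (fst q) * [:1,1:] ^ card ({1..n} - fst q - snd q)"
      by (subst pow_sum) auto
    finally show "(\<Sum>Z\<in>?B q. ?F (fst q \<union> Z, snd q \<union> Z)) =
       of_nat (cc n q) * [:0,1:] ^ card (fst q) * [:1,1:] ^ card ({1..n} - fst q - snd q)" .
  qed
  finally show ?thesis .
qed


definition DD :: "nat \<Rightarrow> (nat set \<times> nat set) set" where
  "DD n = {q\<in>Pow {1..n} \<times> Pow {1..n}. fst q \<inter> snd q = {} \<and> card (fst q) = card (snd q)}"

lemma finite_DD: "finite (DD n)"
  by (rule finite_subset[of _ "Pow {1..n} \<times> Pow {1..n}"]) (auto simp: DD_def)

lemma cls_card: "\<sigma> \<in> cls n X Y \<Longrightarrow> card X = card Y"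
  using card_beta by (auto simp: cls_def)

lemma DD_bound: "q \<in> DD n \<Longrightarrow> card (fst q) \<le> n div 2"
proof -
  assume q: "q \<in> DD n"
  have s: "fst q \<union> snd q \<subseteq> {1..n}" "fst q \<inter> snd q = {}" "card (fst q) = card (snd q)"
    using q by (auto simp: DD_def)
  have "finite (fst q)" "finite (snd q)" using s(1) finite_subset by auto
  then have "card (fst q \<union> snd q) = card (fst q) + card (snd q)" using s(2) by (rule card_Un_disjoint)
  moreover have "card (fst q \<union> snd q) \<le> n" using card_mono[OF _ s(1)] by simp
  ultimately show ?thesis using s(3) by linarith
qed

lemma step4:
  "(\<Sum>q\<in>{q\<in>Pow {1..n} \<times> Pow {1..n}. fst q \<inter> snd q = {}}.
        of_nat (cc n q) * ([:0,1:] :: int poly) ^ card (fst q) * [:1,1:] ^ card ({1..n} - fst q - snd q))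
   = (\<Sum>q\<in>DD n. of_nat (cc n q) * [:0,1:] ^ card (fst q) * [:1,1:] ^ (n - 2 * card (fst q)))"
proof -
  let ?D = "{q\<in>Pow {1..n} \<times> Pow {1..n}. fst q \<inter> snd q = {}}"
  have "(\<Sum>q\<in>?D. of_nat (cc n q) * ([:0,1:] :: int poly) ^ card (fst q) * [:1,1:] ^ card ({1..n} - fst q - snd q))
      = (\<Sum>q\<in>DD n. of_nat (cc n q) * ([:0,1:] :: int poly) ^ card (fst q) * [:1,1:] ^ card ({1..n} - fst q - snd q))"
  proof (rule sum.mono_neutral_right)
    show "finite ?D" by (rule finite_subset[of _ "Pow {1..n} \<times> Pow {1..n}"]) auto
    show "DD n \<subseteq> ?D" by (auto simp: DD_def)
    show "\<forall>q\<in>?D - DD n. of_nat (cc n q) * ([:0,1:] :: int poly) ^ card (fst q) * [:1,1:] ^ card ({1..n} - fst q - snd q) = 0"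
    proof
      fix q assume q: "q \<in> ?D - DD n"
      then have "card (fst q) \<noteq> card (snd q)" by (auto simp: DD_def)
      then have "cls n (fst q) (snd q) = {}" using cls_card by blast
      then show "of_nat (cc n q) * ([:0,1:] :: int poly) ^ card (fst q) * [:1,1:] ^ card ({1..n} - fst q - snd q) = 0"
        by simp
    qed
  qed
  also have "\<dots> = (\<Sum>q\<in>DD n. of_nat (cc n q) * [:0,1:] ^ card (fst q) * [:1,1:] ^ (n - 2 * card (fst q)))"
  proof (rule sum.cong[OF refl])
    fix q assume q: "q \<in> DD n"
    have s: "fst q \<union> snd q \<subseteq> {1..n}" "fst q \<inter> snd q = {}" "card (fst q) = card (snd q)"
      using q by (auto simp: DD_def)
    have "finite (fst q)" "finite (snd q)" using s(1) finite_subset by auto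
    then have u: "card (fst q \<union> snd q) = card (fst q) + card (snd q)" using s(2) by (rule card_Un_disjoint)
    have "{1..n} - fst q - snd q = {1..n} - (fst q \<union> snd q)" by blast
    then have "card ({1..n} - fst q - snd q) = n - card (fst q \<union> snd q)"
      using card_Diff_subset[OF _ s(1)] s(1) finite_subset by auto
    then have "card ({1..n} - fst q - snd q) = n - 2 * card (fst q)" using u s(3) by simp
    then show "of_nat (cc n q) * ([:0,1:] :: int poly) ^ card (fst q) * [:1,1:] ^ card ({1..n} - fst q - snd q)
        = of_nat (cc n q) * [:0,1:] ^ card (fst q) * [:1,1:] ^ (n - 2 * card (fst q))" by simp
  qed
  finally show ?thesis .
qed

lemma step5: "gamma n j = (\<Sum>q\<in>{q. q \<in> DD n \<and> card (fst q) = j}. cc n q)"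
proof -
  let ?A = "{\<sigma>. primary n \<sigma> \<and> dropnum \<sigma> (2*n) = j}"
  let ?T = "{q. q \<in> DD n \<and> card (fst q) = j}"
  let ?g = "\<lambda>\<sigma>. (tau n \<sigma>, beta n \<sigma>)"
  have fA: "finite ?A" using finite_R by (rule finite_subset[rotated]) (auto simp: primary_def)
  have "gamma n j = (\<Sum>\<sigma>\<in>?A. 1)" by (simp add: gamma_def)
  also have "\<dots> = (\<Sum>q\<in>?T. \<Sum>\<sigma>\<in>{\<sigma>. \<sigma> \<in> ?A \<and> ?g \<sigma> = q}. 1)"
  proof (rule sum.group[symmetric, OF fA])
    show "finite ?T" using finite_DD by auto
    show "?g ` ?A \<subseteq> ?T"
    proof
      fix z assume "z \<in> ?g ` ?A"
      then obtain \<sigma> where "primary n \<sigma>" "dropnum \<sigma> (2*n) = j" and z: "z = ?g \<sigma>" by blast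
      then have "\<sigma> \<in> R n" "tau n \<sigma> \<inter> beta n \<sigma> = {}" "card (tau n \<sigma>) = j"
        using primary_iff dropnum_eq by auto
      then show "z \<in> ?T" unfolding z using card_beta tau_sub beta_sub by (auto simp: DD_def)
    qed
  qed
  also have "\<dots> = (\<Sum>q\<in>?T. cc n q)"
  proof (rule sum.cong[OF refl])
    fix q assume q: "q \<in> ?T"
    have "{\<sigma>. \<sigma> \<in> ?A \<and> ?g \<sigma> = q} = cls n (fst q) (snd q)"
    proof (cases q)
      case (Pair X Y)
      then show ?thesis using q
        by (auto simp: cls_def primary_iff dropnum_eq DD_def)
    qed
    then show "(\<Sum>\<sigma>\<in>{\<sigma>. \<sigma> \<in> ?A \<and> ?g \<sigma> = q}. 1) = cc n q" by simp
  qed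
  finally show ?thesis .
qed

lemma step6:
  "(\<Sum>q\<in>DD n. of_nat (cc n q) * ([:0,1:] :: int poly) ^ card (fst q) * [:1,1:] ^ (n - 2 * card (fst q)))
   = (\<Sum>j = 0..n div 2. of_nat (gamma n j) * [:0, 1:] ^ j * [:1, 1:] ^ (n - 2*j))"
proof -
  have "(\<Sum>q\<in>DD n. of_nat (cc n q) * ([:0,1:] :: int poly) ^ card (fst q) * [:1,1:] ^ (n - 2 * card (fst q)))
    = (\<Sum>j = 0..n div 2. \<Sum>q\<in>{q. q \<in> DD n \<and> card (fst q) = j}.
          of_nat (cc n q) * ([:0,1:] :: int poly) ^ card (fst q) * [:1,1:] ^ (n - 2 * card (fst q)))"
    by (rule sum.group[symmetric]) (auto simp: finite_DD dest: DD_bound)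
  also have "\<dots> = (\<Sum>j = 0..n div 2. of_nat (gamma n j) * [:0, 1:] ^ j * [:1, 1:] ^ (n - 2*j))"
  proof (rule sum.cong[OF refl])
    fix j
    have "(\<Sum>q\<in>{q. q \<in> DD n \<and> card (fst q) = j}.
          of_nat (cc n q) * ([:0,1:] :: int poly) ^ card (fst q) * [:1,1:] ^ (n - 2 * card (fst q)))
        = (\<Sum>q\<in>{q. q \<in> DD n \<and> card (fst q) = j}. of_nat (cc n q) * (([:0,1:] :: int poly) ^ j * [:1,1:] ^ (n - 2 * j)))"
      by (rule sum.cong) (auto simp: mult.assoc)
    also have "\<dots> = of_nat (\<Sum>q\<in>{q. q \<in> DD n \<and> card (fst q) = j}. cc n q) * (([:0,1:] :: int poly) ^ j * [:1,1:] ^ (n - 2 * j))"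
      by (simp add: sum_distrib_right)
    also have "\<dots> = of_nat (gamma n j) * [:0, 1:] ^ j * [:1, 1:] ^ (n - 2*j)"
      by (simp add: step5 mult.assoc)
    finally show "(\<Sum>q\<in>{q. q \<in> DD n \<and> card (fst q) = j}.
          of_nat (cc n q) * ([:0,1:] :: int poly) ^ card (fst q) * [:1,1:] ^ (n - 2 * card (fst q)))
        = of_nat (gamma n j) * [:0, 1:] ^ j * [:1, 1:] ^ (n - 2*j)" .
  qed
  finally show ?thesis .
qed

theorem mainTheorem6:
  fixes n :: nat
  assumes "n \<ge> 1"
  shows "(\<Sum>\<sigma>\<in>R n. [:0, 1:] ^ dropnum \<sigma> (2*n)) =
         (\<Sum>j = 0..n div 2. of_nat (gamma n j) * [:0, 1:] ^ j * [:1, 1:] ^ (n - 2*j) :: int poly)"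
  using step2[of n] step3[of n] step4[of n] step6[of n] by simp

end
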